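(* Fix a positive integer $r$ and a positive integer $s$, and let $x_1,\dots,x_s,y_1,\dots,y_s,X,Y$ be real numbers with $r<x_i\leq y_i$ for all $i\in\{1,\dots,s\}$. If $Y\geq\max(x_1,\dots,x_s)$ and $\displaystyle X\prod_{i=1}^s x_i<Y\prod_{i=1}^s y_i$, then $\displaystyle (X-r)\prod_{i=1}^s(x_i-r)<(Y-r)\prod_{i=1}^s(y_i-r)$. *)

theory Defs
  imports Complex_Main
begin

end

theory Submission
  imports Defs
begin

lemma step_ineq:
  fixes Y Q P x y r :: real
  assumes "x \<le> y" "0 \<le> x" "x \<le> Y" "P \<le> Q" "0 \<le> P" "0 \<le> r"
  shows "(Y*y*Q - r*(x*P)) * (x - r) \<le> (Y*Q - r*P) * (y - r) * x"
proof -
  have "x*P \<le> Y*Q" using assms by (meson mult_mono order_trans)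
  hence h: "0 \<le> (y-x)*(Y*Q - x*P)" using assms by simp
  have e: "(Y*Q - r*P) * (y - r) * x - (Y*y*Q - r*(x*P)) * (x - r) = r*((y-x)*(Y*Q - x*P))"
    by (simp add: algebra_simps)
  have "0 \<le> r*((y-x)*(Y*Q - x*P))" using h assms by simp
  with e show ?thesis by linarith
qed

lemma main_ineq:
  fixes x y :: "nat \<Rightarrow> real" and Y r :: real
  assumes "finite S" "\<And>i. i \<in> S \<Longrightarrow> r < x i \<and> x i \<le> y i \<and> x i \<le> Y" "0 \<le> r"
  shows "(Y*(\<Prod>i\<in>S. y i) - r*(\<Prod>i\<in>S. x i)) * (\<Prod>i\<in>S. (x i - r))
         \<le> (Y - r) * (\<Prod>i\<in>S. (y i - r)) * (\<Prod>i\<in>S. x i)"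
  using assms
proof (induction S rule: finite_induct)
  case empty
  then show ?case by simp
next
  case (insert a S)
  define P where "P = (\<Prod>i\<in>S. x i)"
  define Q where "Q = (\<Prod>i\<in>S. y i)"
  define A where "A = (\<Prod>i\<in>S. (x i - r))"
  define B where "B = (\<Prod>i\<in>S. (y i - r))"
  have IH: "(Y*Q - r*P) * A \<le> (Y - r) * B * P"
    using insert unfolding P_def Q_def A_def B_def by auto
  have ha: "r < x a" "x a \<le> y a" "x a \<le> Y" using insert by auto
  have A0: "0 \<le> A" unfolding A_def using insert.prems
    by (intro prod_nonneg) (auto simp: less_imp_le)
  have P0: "0 \<le> P" unfolding P_def using insert.prems assms(3)
    by (intro prod_nonneg) (metis insert_iff le_less_trans less_imp_le)
  have PQ: "P \<le> Q" unfolding P_def Q_def using insert.prems assms(3)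
    by (intro prod_mono) (metis insert_iff le_less_trans less_imp_le)
  have xa0: "0 \<le> x a" using ha assms(3) by linarith
  have s: "(Y*y a*Q - r*(x a*P)) * (x a - r) \<le> (Y*Q - r*P) * (y a - r) * x a"
    by (rule step_ineq) (use ha xa0 PQ P0 assms(3) in auto)
  have "(Y*y a*Q - r*(x a*P)) * (x a - r) * A \<le> (Y*Q - r*P) * (y a - r) * x a * A"
    using s A0 by (rule mult_right_mono)
  also have "\<dots> = ((Y*Q - r*P) * A) * ((y a - r) * x a)" by (simp add: algebra_simps)
  also have "\<dots> \<le> ((Y - r) * B * P) * ((y a - r) * x a)"
    using IH ha xa0 by (intro mult_right_mono) auto
  finally have "(Y*y a*Q - r*(x a*P)) * (x a - r) * A \<le> ((Y - r) * B * P) * ((y a - r) * x a)" .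
  then show ?case using insert(1,2) unfolding P_def Q_def A_def B_def
    by (simp add: algebra_simps)
qed

theorem lemma2p1:
  fixes r s :: nat and x y :: "nat \<Rightarrow> real" and X Y :: real
  assumes "r \<ge> 1" and "s \<ge> 1"
    and "\<And>i. i \<in> {1..s} \<Longrightarrow> real r < x i \<and> x i \<le> y i"
    and "Y \<ge> Max (x ` {1..s})"
    and "X * (\<Prod>i=1..s. x i) < Y * (\<Prod>i=1..s. y i)"
  shows "(X - real r) * (\<Prod>i=1..s. (x i - real r)) < (Y - real r) * (\<Prod>i=1..s. (y i - real r))"
proof -
  define P where "P = (\<Prod>i=1..s. x i)"
  define Q where "Q = (\<Prod>i=1..s. y i)"
  define A where "A = (\<Prod>i=1..s. (x i - real r))"
  define B where "B = (\<Prod>i=1..s. (y i - real r))"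
  have xY: "x i \<le> Y" if "i \<in> {1..s}" for i
    using assms(4) that by (meson Max_ge finite_atLeastAtMost finite_imageI image_eqI order_trans)
  have M: "(Y*Q - real r*P) * A \<le> (Y - real r) * B * P"
    unfolding P_def Q_def A_def B_def
    by (rule main_ineq) (use assms(3) xY in auto)
  have A0: "0 < A" unfolding A_def using assms(3) by (intro prod_pos) auto
  have P0: "0 < P" unfolding P_def using assms(3)
    by (intro prod_pos) (metis of_nat_0_le_iff le_less_trans)
  have "(X*P - real r*P) * A < (Y*Q - real r*P) * A"
    using assms(5) A0 unfolding P_def Q_def by simp
  also note M
  finally have "((X - real r) * A) * P < ((Y - real r) * B) * P" by (simp add: algebra_simps)
  with P0 show ?thesis unfolding A_def B_def by simp
qed

end
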